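(* Let $d\ge5$ and $k=k_0(d)$, where $k_0(d)=(d+1)/2$ if $d$ is odd and $k_0(d)=d/2+1$ if $d$ is even. Then for every $x>1$, $$\frac{(x+1)f'(x)}{k}<\big(1+\eta(x)\big)f(x).$$
   Context: $f(x)=\binom dk^{-1}\sum_{i=0}^{d-k}\binom ki\binom{d-k}{i}x^{k-i}$ and $\eta(x)=\dfrac{2k-d}{d-k+\sqrt{(d-k)^2+d(2k-d)f(x)}}$. *)

theory Defs
  imports "HOL-Analysis.Analysis"
begin

definition fpoly :: "nat \<Rightarrow> nat \<Rightarrow> real \<Rightarrow> real" where
  "fpoly d k x = (\<Sum>i=0..d-k. real (k choose i) * real ((d-k) choose i) * x ^ (k-i)) / real (d choose k)"

definition eta :: "nat \<Rightarrow> nat \<Rightarrow> real \<Rightarrow> real" where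
  "eta d k x = (2 * real k - real d) /
     (real d - real k + sqrt ((real d - real k)^2 + real d * (2 * real k - real d) * fpoly d k x))"

definition k0 :: "nat \<Rightarrow> nat" where
  "k0 d = (if odd d then (d + 1) div 2 else d div 2 + 1)"

end

theory Submission
  imports Defs
begin

lemma choose_swap: "(k choose i) * ((k - i) choose j) = (k choose j) * ((k - j) choose i)"
proof (cases "i + j \<le> k")
  case True
  have a: "(k choose (i+j)) * ((i+j) choose i) = (k choose i) * ((k - i) choose j)"
    using choose_mult[of i "i+j" k] True by simp
  have b: "(k choose (i+j)) * ((i+j) choose j) = (k choose j) * ((k - j) choose i)"
    using choose_mult[of j "i+j" k] True by simp
  have "(i+j) choose i = (i+j) choose j"
    using binomial_symmetric[of i "i+j"] by simp
  then show ?thesis using a b by simp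
next
  case False
  then show ?thesis
    by (cases "i \<le> k"; cases "j \<le> k") (auto simp: binomial_eq_0)
qed

lemma inner_sum:
  assumes "j \<le> k"
  shows "(\<Sum>i\<le>n. (k choose i) * (n choose i) * ((k - i) choose j)) = (k choose j) * ((k - j + n) choose n)"
proof -
  have "(\<Sum>i\<le>n. (k choose i) * (n choose i) * ((k - i) choose j))
      = (\<Sum>i\<le>n. (k choose j) * (((k - j) choose i) * (n choose (n - i))))"
  proof (rule sum.cong[OF refl])
    fix i assume "i \<in> {..n}"
    then have "n choose (n - i) = n choose i" using binomial_symmetric[of i n] by simp
    then show "(k choose i) * (n choose i) * ((k - i) choose j) = (k choose j) * (((k - j) choose i) * (n choose (n - i)))"
      using choose_swap[of k i j] by (simp add: mult_ac)
  qed
  also have "\<dots> = (k choose j) * ((k - j + n) choose n)"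
    by (simp add: sum_distrib_left[symmetric] vandermonde)
  finally show ?thesis .
qed

lemma expand:
  fixes x :: real
  shows "(\<Sum>i=0..n. real (k choose i) * real (n choose i) * x ^ (k - i))
       = (\<Sum>j\<le>k. real ((k choose j) * ((k - j + n) choose n)) * (x - 1) ^ j)"
proof -
  have pw: "x ^ (k - i) = (\<Sum>j\<le>k. real ((k - i) choose j) * (x - 1) ^ j)" for i
  proof -
    have "x ^ (k - i) = ((x - 1) + 1) ^ (k - i)" by simp
    also have "\<dots> = (\<Sum>j\<le>k - i. real ((k - i) choose j) * (x - 1) ^ j)"
      by (subst binomial_ring) simp
    also have "\<dots> = (\<Sum>j\<le>k. real ((k - i) choose j) * (x - 1) ^ j)"
      by (rule sum.mono_neutral_left) (auto simp: binomial_eq_0)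
    finally show ?thesis .
  qed
  have "(\<Sum>i=0..n. real (k choose i) * real (n choose i) * x ^ (k - i))
      = (\<Sum>i\<le>n. \<Sum>j\<le>k. real ((k choose i) * (n choose i) * ((k - i) choose j)) * (x - 1) ^ j)"
    by (simp add: atLeast0AtMost pw sum_distrib_left mult_ac)
  also have "\<dots> = (\<Sum>j\<le>k. \<Sum>i\<le>n. real ((k choose i) * (n choose i) * ((k - i) choose j)) * (x - 1) ^ j)"
    by (rule sum.swap)
  also have "\<dots> = (\<Sum>j\<le>k. real (\<Sum>i\<le>n. (k choose i) * (n choose i) * ((k - i) choose j)) * (x - 1) ^ j)"
    by (simp add: sum_distrib_right)
  also have "\<dots> = (\<Sum>j\<le>k. real ((k choose j) * ((k - j + n) choose n)) * (x - 1) ^ j)"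
    by (rule sum.cong[OF refl]) (simp only: inner_sum atMost_iff)
  finally show ?thesis .
qed

lemma F_split:
  fixes y :: real
  shows "(\<Sum>j\<le>Suc m. real (Suc m choose j) * real ((Suc m - j + n) choose n) * y ^ j)
    = (\<Sum>j\<le>m. real (m choose j) * real ((Suc m - j + n) choose n) * y ^ j)
      + y * (\<Sum>j\<le>m. real (m choose j) * real ((m - j + n) choose n) * y ^ j)"
proof -
  have D: "(\<Sum>j\<le>m. real (m choose j) * real ((Suc m - j + n) choose n) * y ^ j)
     = (\<Sum>j\<le>Suc m. real (m choose j) * real ((Suc m - j + n) choose n) * y ^ j)"
    by simp
  have E1: "(\<Sum>j\<le>Suc m. real (Suc m choose j) * real ((Suc m - j + n) choose n) * y ^ j)
      = real ((Suc m + n) choose n) + (\<Sum>j\<le>m. real (m choose j) * real ((m - j + n) choose n) * y ^ Suc j)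
        + (\<Sum>j\<le>m. real (m choose Suc j) * real ((m - j + n) choose n) * y ^ Suc j)"
    by (subst sum.atMost_Suc_shift) (simp add: sum.distrib algebra_simps)
  have E2: "real ((Suc m + n) choose n) + (\<Sum>j\<le>m. real (m choose Suc j) * real ((m - j + n) choose n) * y ^ Suc j)
     = (\<Sum>j\<le>m. real (m choose j) * real ((Suc m - j + n) choose n) * y ^ j)"
    unfolding D by (subst sum.atMost_Suc_shift) simp
  show ?thesis unfolding E1 E2[symmetric] by (simp add: sum_distrib_left algebra_simps)
qed

lemma deriv_shift:
  fixes y :: real
  shows "(\<Sum>j\<le>Suc m. real (Suc m choose j) * real ((Suc m - j + n) choose n) * (real j * y ^ (j - 1)))
    = real (Suc m) * (\<Sum>j\<le>m. real (m choose j) * real ((m - j + n) choose n) * y ^ j)"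
proof -
  have "(\<Sum>j\<le>Suc m. real (Suc m choose j) * real ((Suc m - j + n) choose n) * (real j * y ^ (j - 1)))
      = (\<Sum>j\<le>m. real (Suc j * (Suc m choose Suc j)) * real ((m - j + n) choose n) * y ^ j)"
    by (subst sum.atMost_Suc_shift) (simp add: algebra_simps)
  also have "\<dots> = (\<Sum>j\<le>m. real (Suc m) * (real (m choose j) * real ((m - j + n) choose n) * y ^ j))"
    by (simp only: Suc_times_binomial) (simp add: algebra_simps)
  finally show ?thesis by (simp add: sum_distrib_left)
qed

lemma has_der:
  fixes x :: real
  shows "((\<lambda>x. \<Sum>j\<le>k. a j * (x - 1) ^ j) has_real_derivative (\<Sum>j\<le>k. a j * (real j * (x - 1) ^ (j - 1)))) (at x)"
  by (auto intro!: derivative_eq_intros sum.cong simp: mult_ac)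

lemma key_poly:
  fixes n y :: real
  assumes n: "n \<ge> 2" and y: "y > 0" and p: "1 - E*y^2 > 0"
  and Cc: "Cc = 2*(2*n+1)/(n+2)" and a1: "a1 = (2*n+1)*(n+2)/(n+1)" and a2: "a2 = (n+2)*(n+1)/2"
  and E: "E = (n+1)*n*(n-1)/(12*(2*n-1))" and nint: "n = 2 \<or> n \<ge> 3"
  shows "(1 - E*y^2) * ((n+2)*Cc + a1*y + a2*y^2) < Cc*(a1 + a2*y)"
proof -
  have nz: "n+1 \<noteq> 0" "n+2 \<noteq> 0" "n \<noteq> 0" "2*n-1 \<noteq> 0" "n-1 \<noteq> 0" using n by auto
  have E0: "E > 0" using n unfolding E by (intro divide_pos_pos mult_pos_pos) auto
  have c1: "(n+2)*Cc = 2*(2*n+1)" using n unfolding Cc by (simp add: field_simps)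
  have pos: "n+1 > 0" "n+2 > 0" "n > 0" "2*n-1 > 0" "n - 1 > 0" using n by auto
  have c2: "Cc*a1 = 2*(2*n+1)^2/(n+1)" unfolding Cc a1 using pos by (simp add: divide_simps) (simp add: algebra_simps power2_eq_square)
  have c3: "Cc*a2 = (2*n+1)*(n+1)" using n unfolding Cc a2 by (simp add: field_simps)
  have a1pos: "a1 > 0" "a2 > 0" using n unfolding a1 a2 by auto
  have a1le: "a1 \<le> Cc*a2"
  proof -
    have "(n+1)*(n+1) = n*n + 2*n + 1" by (simp add: algebra_simps)
    then have "(n+2) \<le> (n+1)*(n+1)" using n zero_le_square[of n] by linarith
    then have "(2*n+1)*(n+2) \<le> (2*n+1)*((n+1)*(n+1))" using n by (intro mult_left_mono) auto
    then show ?thesis unfolding c3 a1 using pos by (simp add: divide_simps)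
  qed
  have p1: "1 - E*y^2 \<le> 1" using E0 by simp
  have p0: "0 \<le> 1 - E*y^2" using p by simp
  have i1: "(1 - E*y^2) * ((n+2)*Cc) \<le> 2*(2*n+1)" using p1 p0 c1 n
    by (simp add: mult_left_le_one_le)
  have i2: "(1 - E*y^2) * (a1*y) \<le> Cc*a2*y"
  proof -
    have "(1 - E*y^2) * (a1*y) \<le> a1*y" using p1 p0 a1pos y by (simp add: mult_left_le_one_le)
    also have "\<dots> \<le> Cc*a2*y" using a1le y by simp
    finally show ?thesis .
  qed
  have i3: "(1 - E*y^2) * (a2*y^2) \<le> a2/(4*E)"
  proof -
    have "4*E*(y^2*(1 - E*y^2)) \<le> 1"
      using zero_le_power2[of "1 - 2*E*y^2"] by (simp add: algebra_simps power2_eq_square)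
    then have "(1 - E*y^2) * y^2 \<le> 1/(4*E)" using E0 by (simp add: field_simps)
    then have "a2 * ((1 - E*y^2) * y^2) \<le> a2 * (1/(4*E))" using a1pos by (intro mult_left_mono) auto
    then show ?thesis by (simp add: field_simps)
  qed
  show ?thesis
  proof (cases "n \<ge> 3")
    case True
    have q: "a2/(4*E) = 3*(n+2)*(2*n-1)/(2*n*(n-1))"
      unfolding a2 E using pos by (simp add: divide_simps) (simp add: algebra_simps)
    have b1: "3*(n+2)*(n+1) < 4*n^2*(n-1)"
    proof -
      have "9*n \<le> 3*n^2" using True by (simp add: power2_eq_square)
      moreover have "6 < n^2" using True mult_mono[of 3 n 3 n] by (simp add: power2_eq_square)
      moreover have "8*n^2 \<le> 4*n^2*(n-1)" using True by (simp add: power2_eq_square)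
      ultimately show ?thesis by (simp add: algebra_simps power2_eq_square)
    qed
    have b2: "3*(n+2)*(2*n-1)*(n+1) < 4*(2*n+1)*n^2*(n-1)"
    proof -
      have "3*(n+2)*(2*n-1)*(n+1) = (2*n-1) * (3*(n+2)*(n+1))" by simp
      also have "\<dots> < (2*n-1) * (4*n^2*(n-1))" using b1 pos by simp
      also have "\<dots> \<le> (2*n+1) * (4*n^2*(n-1))" using pos by (intro mult_right_mono) auto
      finally show ?thesis by (simp add: algebra_simps)
    qed
    have b3: "2*(2*n+1) + a2/(4*E) < Cc*a1"
      unfolding q c2 using pos b2 by (simp add: divide_simps) (simp add: algebra_simps power2_eq_square)
    have "(1 - E*y^2) * ((n+2)*Cc + a1*y + a2*y^2)
        = (1 - E*y^2) * ((n+2)*Cc) + (1 - E*y^2) * (a1*y) + (1 - E*y^2) * (a2*y^2)"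
      by (simp add: algebra_simps)
    also have "\<dots> \<le> 2*(2*n+1) + Cc*a2*y + a2/(4*E)" using i1 i2 i3 by simp
    also have "\<dots> < Cc*(a1 + a2*y)" using b3 by (simp add: algebra_simps)
    finally show ?thesis .
  next
    case False
    then have n2: "n = 2" using nint by simp
    have v: "Cc = 5/2" "a1 = 20/3" "a2 = 6" "E = 1/6" unfolding Cc a1 a2 E n2 by simp_all
    have i2': "(1 - E*y^2) * (a1*y) \<le> a1*y" using p1 p0 a1pos y by (simp add: mult_left_le_one_le)
    have main: "y^4 - 6*y^2 + 25*y/3 + 20/3 > 0"
    proof (cases "y \<ge> 3/10")
      case True
      have "y^4 - 6*y^2 + 9 \<ge> 0" using zero_le_power2[of "y^2 - 3"] by (simp add: algebra_simps power2_eq_square power4_eq_xxxx)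
      then show ?thesis using True by simp
    next
      case False
      have "y^2 \<le> (3/10)^2" using False y by (intro power_mono) auto
      then have h1: "y^2 \<le> 9/100" by (simp add: power_divide)
      have h2: "y^4 \<ge> 0" by simp
      show ?thesis using h1 h2 y by linarith
    qed
    have "(1 - E*y^2) * ((n+2)*Cc + a1*y + a2*y^2)
        = (1 - E*y^2) * ((n+2)*Cc) + (1 - E*y^2) * (a1*y) + (1 - E*y^2) * (a2*y^2)"
      by (simp add: algebra_simps)
    also have "\<dots> \<le> 2*(2*n+1) + a1*y + (1 - E*y^2) * (a2*y^2)" using i1 i2' by simp
    also have "\<dots> < Cc*(a1 + a2*y)" using main unfolding v n2 by (simp add: algebra_simps power2_eq_square power4_eq_xxxx)
    finally show ?thesis .
  qed
qed
lemma even_core: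
  fixes n y H F Cc a1 a2 E :: real
  assumes n: "n \<ge> 2" and nint: "n = 2 \<or> n \<ge> 3" and y: "y > 0"
  and Cc: "Cc = 2*(2*n+1)/(n+2)" and a1: "a1 = (2*n+1)*(n+2)/(n+1)" and a2: "a2 = (n+2)*(n+1)/2"
  and E: "E = (n+1)*n*(n-1)/(12*(2*n-1))"
  and hF: "F \<ge> Cc + a1*y + a2*y^2" and hH: "H \<le> Cc/(n+1) + y - E*y^3"
  shows "H*(n+1)*((n+1)*Cc + F) < (n+2)*Cc*F"
proof -
  define A where "A = (n+1)*Cc"
  define Fl where "Fl = Cc + a1*y + a2*y^2"
  define q where "q = (n+1)*(y - E*y^3)"
  have Cp: "Cc > 0" unfolding Cc using n by simp
  have a1p: "a1 > 0" "a2 > 0" unfolding a1 a2 using n by auto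
  have Ap: "A > 0" unfolding A_def using Cp n by simp
  have Flp: "Fl - Cc \<ge> a1*y" unfolding Fl_def using a1p by simp
  have FC: "F - Cc > 0" using hF a1p y by (smt (verit) mult_pos_pos zero_le_power2 mult_nonneg_nonneg)
  have AF: "A + F > 0" using Ap FC Cp by simp
  have h1: "H*(n+1) \<le> Cc + q"
  proof -
    have "H*(n+1) \<le> (Cc/(n+1) + y - E*y^3)*(n+1)" using hH n by (intro mult_right_mono) auto
    also have "\<dots> = Cc + q" unfolding q_def using n by (simp add: field_simps)
    finally show ?thesis .
  qed
  have h2: "H*(n+1)*(A + F) \<le> (Cc + q)*(A + F)" using h1 AF by (intro mult_right_mono) auto
  have goal: "q*(A+F) < (n+1)*Cc*(F - Cc)"
  proof (cases "q \<le> 0")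
    case True
    have "q*(A+F) \<le> 0" using True AF by (simp add: mult_nonpos_nonneg)
    also have "0 < (n+1)*Cc*(F - Cc)" using FC Cp n by simp
    finally show ?thesis .
  next
    case False
    then have qp: "q > 0" by simp
    have "y - E*y^3 > 0" using qp n unfolding q_def by (simp add: zero_less_mult_iff)
    then have "y*(1 - E*y^2) > 0" by (simp add: algebra_simps power2_eq_square power3_eq_cube)
    then have p: "1 - E*y^2 > 0" using y by (simp add: zero_less_mult_iff)
    have kp: "(1 - E*y^2) * ((n+2)*Cc + a1*y + a2*y^2) < Cc*(a1 + a2*y)"
      by (rule key_poly[OF n y p Cc a1 a2 E nint])
    have "(n+1)*y*((1 - E*y^2) * ((n+2)*Cc + a1*y + a2*y^2)) < (n+1)*y*(Cc*(a1 + a2*y))"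
      using kp n y by (intro mult_strict_left_mono) auto
    then have k1: "q*(A + Fl) < (n+1)*Cc*(Fl - Cc)"
      unfolding q_def A_def Fl_def by (simp add: algebra_simps power2_eq_square power3_eq_cube)
    have AFl: "A + Fl > 0" using Ap Flp a1p y Cp by (smt (verit) mult_pos_pos)
    have "q*(A + Fl) < (n+1)*Cc*(A + Fl)"
    proof -
      have "(n+1)*Cc*(Fl - Cc) \<le> (n+1)*Cc*(A + Fl)" using Ap Cp n by (intro mult_left_mono) auto
      then show ?thesis using k1 by simp
    qed
    then have qs: "q < (n+1)*Cc" using AFl by simp
    have FFl: "F - Fl \<ge> 0" using hF unfolding Fl_def by simp
    have "q*(A+F) = q*(A + Fl) + q*(F - Fl)" by (simp add: algebra_simps)
    also have "\<dots> < (n+1)*Cc*(Fl - Cc) + (n+1)*Cc*(F - Fl)"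
      using k1 qs FFl by (smt (verit) mult_right_mono)
    also have "\<dots> = (n+1)*Cc*(F - Cc)" by (simp add: algebra_simps)
    finally show ?thesis .
  qed
  have "H*(n+1)*((n+1)*Cc + F) \<le> (Cc + q)*(A + F)" using h2 unfolding A_def .
  also have "\<dots> < (n+2)*Cc*F" using goal unfolding A_def by (simp add: algebra_simps)
  finally show ?thesis .
qed

lemma choose_step: "Suc r * (M choose Suc r) = (M - r) * (M choose r)"
  by (simp only: binomial_absorption binomial_absorb_comp)

lemma coef_nonpos:
  assumes "Suc M \<le> 2*n" "n \<ge> 1"
  shows "2*real (M choose n) \<le> real (Suc M choose n)"
proof -
  obtain r where r: "n = Suc r" using assms(2) by (cases n) auto
  have "Suc r * (M choose Suc r) = (M - r) * (M choose r)" by (rule choose_step)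
  also have "\<dots> \<le> Suc r * (M choose r)" using assms r by (intro mult_right_mono) auto
  finally have "Suc r * (M choose Suc r) \<le> Suc r * (M choose r)" .
  then have "(M choose Suc r) \<le> (M choose r)" using Suc_mult_le_cancel1 by blast
  then show ?thesis unfolding r binomial_Suc_Suc by linarith
qed

lemma eta_lb:
  fixes d k n f :: real
  assumes "d = n + k" "n \<ge> 0" "k > n" "f > 0"
  shows "2*(2*k-d)*k/(d*(d+(2*k-d)*f)) \<le> (2*k-d)/(n + sqrt(n^2 + d*(2*k-d)*f))"
proof -
  define Z where "Z = n^2 + d*(2*k-d)*f"
  have kp: "k > 0" using assms by simp
  have Z0: "Z \<ge> 0" unfolding Z_def using assms by (intro add_nonneg_nonneg mult_nonneg_nonneg) auto
  have "0 \<le> (sqrt Z - k)^2" by simp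
  then have "2*k * sqrt Z \<le> Z + k^2" using Z0 by (simp add: power2_eq_square algebra_simps)
  then have sq: "sqrt Z \<le> (Z + k^2)/(2*k)" using kp by (simp add: field_simps)
  have "n + sqrt Z \<le> n + (Z + k^2)/(2*k)" using sq by simp
  also have "\<dots> = d*(d+(2*k-d)*f)/(2*k)" unfolding Z_def using kp assms(1)
    by (simp add: field_simps power2_eq_square)
  finally have den: "n + sqrt Z \<le> d*(d+(2*k-d)*f)/(2*k)" .
  have sp: "2*k - d > 0" using assms by simp
  have dp: "n + sqrt Z > 0"
  proof (cases "n = 0")
    case True
    then have "Z > 0" unfolding Z_def using assms sp by simp
    then show ?thesis using True by simp
  next
    case False
    then have "n > 0" using assms by simp
    moreover have "sqrt Z \<ge> 0" using Z0 by simp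
    ultimately show ?thesis by linarith
  qed
  have pp: "d*(d+(2*k-d)*f) > 0" using assms sp by (intro mult_pos_pos add_pos_pos) auto
  have "(2*k-d)/(d*(d+(2*k-d)*f)/(2*k)) \<le> (2*k-d)/(n + sqrt Z)"
    using den dp sp pp kp by (intro divide_left_mono) auto
  then show ?thesis unfolding Z_def using kp by (simp add: field_simps)
qed

lemma odd_H:
  fixes y :: real
  assumes "n \<ge> 1" "y \<ge> 0"
  shows "(\<Sum>j\<le>n. real (n choose j) * (2*real ((n - j + n) choose n) - real ((Suc n - j + n) choose n)) * y^j)
    \<le> 2*real ((2*n) choose n) - real ((2*n+1) choose n)"
proof -
  let ?g = "\<lambda>j. real (n choose j) * (2*real ((n - j + n) choose n) - real ((Suc n - j + n) choose n)) * y^j"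
  have "(\<Sum>j\<le>n. ?g j) = ?g 0 + (\<Sum>j\<in>{Suc 0..n}. ?g j)"
  proof -
    have "{..n} = insert 0 {Suc 0..n}" by auto
    then show ?thesis by (simp only: sum.insert finite_atLeastAtMost) auto
  qed
  moreover have "(\<Sum>j\<in>{Suc 0..n}. ?g j) \<le> 0"
  proof (rule sum_nonpos)
    fix j assume j: "j \<in> {Suc 0..n}"
    have e: "Suc n - j + n = Suc (n - j + n)" using j by auto
    have "2*real ((n - j + n) choose n) \<le> real (Suc (n - j + n) choose n)"
      using j assms by (intro coef_nonpos) auto
    then have "2*real ((n - j + n) choose n) - real ((Suc n - j + n) choose n) \<le> 0" unfolding e by simp
    then show "?g j \<le> 0" using assms
      by (intro mult_nonpos_nonneg mult_nonneg_nonpos) auto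
  qed
  moreover have "?g 0 = 2*real ((2*n) choose n) - real ((2*n+1) choose n)"
  proof -
    have "n - 0 + n = 2*n" "Suc n - 0 + n = 2*n+1" by auto
    then show ?thesis by (simp only: binomial_n_0 power_0 of_nat_1 mult_1 mult_1_right)
  qed
  ultimately show ?thesis by linarith
qed

lemma even_H:
  fixes y :: real
  assumes "n \<ge> 2" "y \<ge> 0"
  shows "(\<Sum>j\<le>Suc n. real (Suc n choose j) * (2*real ((Suc n - j + n) choose n) - real ((Suc (Suc n) - j + n) choose n)) * y^j)
    \<le> (2*real ((2*n+1) choose n) - real ((2*n+2) choose n))
      + real (n+1) * (2*real ((2*n) choose n) - real ((2*n+1) choose n)) * y
      + real (Suc n choose 3) * (2*real ((2*n-2) choose n) - real ((2*n-1) choose n)) * y^3"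
proof -
  define g where "g = (\<lambda>j. real (Suc n choose j) * (2*real ((Suc n - j + n) choose n) - real ((Suc (Suc n) - j + n) choose n)) * y^j)"
  have nonp: "g j \<le> 0" if j: "2 \<le> j" "j \<le> Suc n" for j
  proof -
    have e: "Suc (Suc n) - j + n = Suc (Suc n - j + n)" using j by auto
    have "2*real ((Suc n - j + n) choose n) \<le> real (Suc (Suc n - j + n) choose n)"
      using j assms by (intro coef_nonpos) auto
    then have "2*real ((Suc n - j + n) choose n) - real ((Suc (Suc n) - j + n) choose n) \<le> 0"
      unfolding e by linarith
    then show "g j \<le> 0" unfolding g_def using assms
      by (intro mult_nonpos_nonneg mult_nonneg_nonpos) auto
  qed
  have S: "{..Suc n} = insert 0 (insert 1 (insert 2 (insert 3 {4..Suc n})))" using assms by auto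
  have "(\<Sum>j\<le>Suc n. g j) = g 0 + (g 1 + (g 2 + (g 3 + (\<Sum>j\<in>{4..Suc n}. g j))))"
    unfolding S by (subst sum.insert, simp, simp)+ (rule refl)
  moreover have "(\<Sum>j\<in>{4..Suc n}. g j) \<le> 0" by (rule sum_nonpos) (use nonp in auto)
  moreover have "g 2 \<le> 0" using nonp assms by auto
  moreover have "g 0 = 2*real ((2*n+1) choose n) - real ((2*n+2) choose n)"
  proof -
    have "Suc n - 0 + n = 2*n+1" "Suc (Suc n) - 0 + n = 2*n+2" by auto
    then show ?thesis unfolding g_def by (simp only: binomial_n_0 power_0 of_nat_1 mult_1 mult_1_right)
  qed
  moreover have "g 1 = real (n+1) * (2*real ((2*n) choose n) - real ((2*n+1) choose n)) * y"
  proof -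
    have "Suc n - 1 + n = 2*n" "Suc (Suc n) - 1 + n = 2*n+1" "Suc n choose 1 = n+1" by auto
    then show ?thesis unfolding g_def by (simp only: power_one_right)
  qed
  moreover have "g 3 = real (Suc n choose 3) * (2*real ((2*n-2) choose n) - real ((2*n-1) choose n)) * y^3"
  proof -
    have "Suc n - 3 + n = 2*n-2" "Suc (Suc n) - 3 + n = 2*n-1" using assms by auto
    then show ?thesis unfolding g_def by (simp only:)
  qed
  ultimately show ?thesis unfolding g_def[symmetric] by linarith
qed

lemma even_F:
  fixes y :: real
  assumes "n \<ge> 2" "y \<ge> 0"
  shows "(\<Sum>j\<le>Suc (Suc n). real (Suc (Suc n) choose j) * real ((Suc (Suc n) - j + n) choose n) * y^j)
    \<ge> real ((2*n+2) choose n) + real (n+2) * real ((2*n+1) choose n) * y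
      + real (Suc (Suc n) choose 2) * real ((2*n) choose n) * y^2"
proof -
  define g where "g = (\<lambda>j. real (Suc (Suc n) choose j) * real ((Suc (Suc n) - j + n) choose n) * y^j)"
  have S: "{..Suc (Suc n)} = insert 0 (insert 1 (insert 2 {3..Suc (Suc n)}))" using assms by auto
  have "(\<Sum>j\<le>Suc (Suc n). g j) = g 0 + (g 1 + (g 2 + (\<Sum>j\<in>{3..Suc (Suc n)}. g j)))"
    unfolding S by (subst sum.insert, simp, simp)+ (rule refl)
  moreover have "(\<Sum>j\<in>{3..Suc (Suc n)}. g j) \<ge> 0" unfolding g_def using assms by (intro sum_nonneg) auto
  moreover have "g 0 = real ((2*n+2) choose n)"
  proof -
    have "Suc (Suc n) - 0 + n = 2*n+2" by auto
    then show ?thesis unfolding g_def by (simp only: binomial_n_0 power_0 of_nat_1 mult_1 mult_1_right)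
  qed
  moreover have "g 1 = real (n+2) * real ((2*n+1) choose n) * y"
  proof -
    have "Suc (Suc n) - 1 + n = 2*n+1" "Suc (Suc n) choose 1 = n+2" by auto
    then show ?thesis unfolding g_def by (simp only: power_one_right)
  qed
  moreover have "g 2 = real (Suc (Suc n) choose 2) * real ((2*n) choose n) * y^2"
  proof -
    have "Suc (Suc n) - 2 + n = 2*n" by auto
    then show ?thesis unfolding g_def by (simp only:)
  qed
  ultimately show ?thesis unfolding g_def[symmetric] by linarith
qed

lemma rels:
  assumes n: "n \<ge> 2"
  shows "(n+1)*((2*n+1) choose n) = (2*n+1)*((2*n) choose n)"
    and "(n+2)*((2*n+2) choose n) = (2*n+2)*((2*n+1) choose n)"
    and "n*((2*n) choose n) = 2*(2*n-1)*((2*n-2) choose (n-1))"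
    and "n*((2*n-1) choose n) = (2*n-1)*((2*n-2) choose (n-1))"
    and "n*((2*n-2) choose n) = (n-1)*((2*n-2) choose (n-1))"
    and "6*((n+1) choose 3) = (n+1)*n*(n-1)"
    and "2*((n+2) choose 2) = (n+2)*(n+1)"
    and "(2*n+2) choose (n+2) = (2*n+2) choose n"
    and "(2*n+1) choose (n+1) = (2*n+1) choose n"
proof -
  show "(n+1)*((2*n+1) choose n) = (2*n+1)*((2*n) choose n)"
    using binomial_absorb_comp[of "2*n+1" n] by (simp add: Suc_diff_le)
  show "(n+2)*((2*n+2) choose n) = (2*n+2)*((2*n+1) choose n)"
    using binomial_absorb_comp[of "2*n+2" n] by (simp add: Suc_diff_le)
  have a: "n*((2*n) choose n) = 2*n*((2*n-1) choose (n-1))"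
    using binomial_absorption[of "n-1" "2*n"] n by simp
  have b: "n*((2*n-1) choose (n-1)) = (2*n-1)*((2*n-2) choose (n-1))"
  proof -
    have "2*n-1-(n-1) = n" "2*n-1-1 = 2*n-2" using n by auto
    then show ?thesis using binomial_absorb_comp[of "2*n-1" "n-1"] by simp
  qed
  have "n*((2*n) choose n) = 2*(n*((2*n-1) choose (n-1)))" using a by (simp only: mult.assoc)
  also have "\<dots> = 2*(2*n-1)*((2*n-2) choose (n-1))" using b by (simp only: mult.assoc)
  finally show "n*((2*n) choose n) = 2*(2*n-1)*((2*n-2) choose (n-1))" .
  have c: "(2*n-1) choose n = (2*n-1) choose (n-1)"
    using binomial_symmetric[of n "2*n-1"] n by (simp add: diff_mult_distrib)
  show "n*((2*n-1) choose n) = (2*n-1)*((2*n-2) choose (n-1))" using b c by simp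
  show "n*((2*n-2) choose n) = (n-1)*((2*n-2) choose (n-1))"
  proof -
    have "Suc (n-1) = n" "2*n-2-(n-1) = n-1" using n by auto
    then show ?thesis using choose_step[of "n-1" "2*n-2"] by simp
  qed
  show "6*((n+1) choose 3) = (n+1)*n*(n-1)"
  proof -
    have h3: "3*((n+1) choose 3) = (n+1)*(n choose 2)"
      using binomial_absorption[of 2 "n+1"] by (simp add: numeral_eq_Suc)
    have h2: "2*(n choose 2) = n*(n-1)"
      using binomial_absorption[of 1 n] by (simp add: numeral_eq_Suc)
    have "6*((n+1) choose 3) = 2*(3*((n+1) choose 3))" by simp
    also have "\<dots> = (n+1)*(2*(n choose 2))" unfolding h3 by (simp only: mult_ac)
    also have "\<dots> = (n+1)*n*(n-1)" unfolding h2 by (simp only: mult_ac)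
    finally show ?thesis .
  qed
  show "2*((n+2) choose 2) = (n+2)*(n+1)"
    using binomial_absorption[of 1 "n+2"] by (simp add: numeral_eq_Suc)
  show "(2*n+2) choose (n+2) = (2*n+2) choose n"
    using binomial_symmetric[of n "2*n+2"] by simp
  show "(2*n+1) choose (n+1) = (2*n+1) choose n"
    using binomial_symmetric[of n "2*n+1"] by simp
qed

lemma even_case_real:
  fixes n y c g u Vv w1 w2 t3 t2 Hs F :: real
  assumes n: "n \<ge> 2" and nint: "n = 2 \<or> n \<ge> 3" and y: "y > 0" and c: "c > 0"
  and r1: "(n+1)*u = (2*n+1)*c" and r2: "(n+2)*Vv = (2*n+2)*u" and r3: "n*c = 2*(2*n-1)*g"
  and r4: "n*w1 = (2*n-1)*g" and r5: "n*w2 = (n-1)*g" and r6: "6*t3 = (n+1)*n*(n-1)"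
  and r7: "2*t2 = (n+2)*(n+1)"
  and hH: "Hs \<le> (2*u - Vv) + (n+1)*(2*c - u)*y + t3*(2*w2 - w1)*y^3"
  and hF: "F \<ge> Vv + (n+2)*u*y + t2*c*y^2"
  shows "Hs/Vv*(2*n+2)*((2*n+2) + 2*(F/Vv)) < 2*2*(n+2)*(F/Vv)"
proof -
  have pos: "n+1 > 0" "n+2 > 0" "n > 0" "2*n-1 > 0" "n-1 > 0" using n by auto
  have u: "u = (2*n+1)*c/(n+1)" using r1 pos by (simp add: field_simps)
  have "(n+2)*Vv = 2*((n+1)*u)" using r2 by (simp add: algebra_simps)
  then have "(n+2)*Vv = 2*(2*n+1)*c" using r1 by simp
  then have Vv: "Vv = 2*(2*n+1)*c/(n+2)" using pos by (simp add: field_simps)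
  have g: "g = n*c/(2*(2*n-1))" using r3 pos by (simp add: field_simps)
  have w1: "w1 = (2*n-1)*g/n" using r4 pos by (simp add: field_simps)
  have w2: "w2 = (n-1)*g/n" using r5 pos by (simp add: field_simps)
  have t3: "t3 = (n+1)*n*(n-1)/6" using r6 by simp
  have t2: "t2 = (n+2)*(n+1)/2" using r7 by simp
  define Cc where "Cc = 2*(2*n+1)/(n+2)"
  define a1 where "a1 = (2*n+1)*(n+2)/(n+1)"
  define a2 where "a2 = (n+2)*(n+1)/2"
  define E where "E = (n+1)*n*(n-1)/(12*(2*n-1))"
  have vC: "Vv = Cc*c" unfolding Vv Cc_def by simp
  have vp: "Vv > 0" unfolding vC Cc_def using pos c by simp
  have e0: "2*u - Vv = Cc/(n+1)*c" unfolding u Vv Cc_def using pos by (simp add: field_simps)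
  have e1: "(n+1)*(2*c - u) = c" unfolding u using pos by (simp add: field_simps)
  have nz: "2*n-1 \<noteq> 0" "n \<noteq> 0" using pos by auto
  have hw: "2*w2 - w1 = -g/n" unfolding w1 w2 using nz by (simp add: field_simps)
  have "t3*(2*w2 - w1) = -((n+1)*(n-1)/6)*g" unfolding hw t3 using nz by (simp add: field_simps)
  also have "\<dots> = -E*c" unfolding g E_def using nz by (simp add: field_simps)
  finally have e3: "t3*(2*w2 - w1) = -E*c" .
  have e4: "(n+2)*u = a1*c" unfolding u a1_def using pos by (simp add: field_simps)
  have e5: "t2*c = a2*c" unfolding t2 a2_def by simp
  have hH': "Hs/c \<le> Cc/(n+1) + y - E*y^3"
  proof -
    have "Hs \<le> (Cc/(n+1) + y - E*y^3)*c" using hH unfolding e0 e1 e3 by (simp add: algebra_simps)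
    then show ?thesis using c by (simp add: field_simps)
  qed
  have hF': "F/c \<ge> Cc + a1*y + a2*y^2"
  proof -
    have "F \<ge> (Cc + a1*y + a2*y^2)*c" using hF unfolding vC e4 e5 by (simp add: algebra_simps)
    then show ?thesis using c by (simp add: field_simps)
  qed
  have core: "(Hs/c)*(n+1)*((n+1)*Cc + F/c) < (n+2)*Cc*(F/c)"
    by (rule even_core[OF n nint y Cc_def a1_def a2_def E_def hF' hH'])
  have "Hs*(n+1)*((n+1)*Vv + F) < (n+2)*Vv*F"
  proof -
    have "(Hs/c)*(n+1)*((n+1)*Cc + F/c) * (c*c) < (n+2)*Cc*(F/c) * (c*c)"
      using core c by (intro mult_strict_right_mono) auto
    moreover have "(Hs/c)*(n+1)*((n+1)*Cc + F/c) * (c*c) = Hs*(n+1)*((n+1)*Vv + F)"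
      unfolding vC using c by (simp add: field_simps)
    moreover have "(n+2)*Cc*(F/c) * (c*c) = (n+2)*Vv*F"
      unfolding vC using c by (simp add: field_simps)
    ultimately show ?thesis by simp
  qed
  then have "Hs*(n+1)*((n+1)*Vv + F) * 4 / (Vv*Vv) < (n+2)*Vv*F * 4 / (Vv*Vv)"
    using vp by (intro divide_strict_right_mono) auto
  moreover have "Hs*(n+1)*((n+1)*Vv + F) * 4 / (Vv*Vv) = Hs/Vv*(2*n+2)*((2*n+2) + 2*(F/Vv))"
    using vp by (simp add: field_simps)
  moreover have "(n+2)*Vv*F * 4 / (Vv*Vv) = 2*2*(n+2)*(F/Vv)"
    using vp by (simp add: field_simps)
  ultimately show ?thesis by simp
qed


lemma F_gt:
  fixes y :: real
  assumes "y > 0"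
  shows "(\<Sum>j\<le>Suc m. real (Suc m choose j) * real ((Suc m - j + n) choose n) * y^j) > real ((Suc m + n) choose n)"
proof -
  define g where "g = (\<lambda>j. real (Suc m choose j) * real ((Suc m - j + n) choose n) * y^j)"
  have S: "{..Suc m} = insert 0 (insert 1 {2..Suc m})" by auto
  have "(\<Sum>j\<le>Suc m. g j) = g 0 + (g 1 + (\<Sum>j\<in>{2..Suc m}. g j))"
    unfolding S by (subst sum.insert, simp, simp)+ (rule refl)
  moreover have "(\<Sum>j\<in>{2..Suc m}. g j) \<ge> 0" unfolding g_def using assms by (intro sum_nonneg) auto
  moreover have "g 0 = real ((Suc m + n) choose n)"
  proof -
    have "Suc m - 0 + n = Suc m + n" by auto
    then show ?thesis unfolding g_def by (simp only: binomial_n_0 power_0 of_nat_1 mult_1 mult_1_right)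
  qed
  moreover have "g 1 > 0"
  proof -
    have "Suc m - 1 + n = m + n" by auto
    then have "g 1 = real (Suc m) * real ((m + n) choose n) * y" unfolding g_def by simp
    moreover have "real ((m + n) choose n) > 0" by simp
    ultimately show ?thesis using assms by simp
  qed
  ultimately show ?thesis unfolding g_def[symmetric] by linarith
qed

lemma Hs_eq:
  fixes y :: real
  shows "(2+y)*(\<Sum>j\<le>m. real (m choose j) * real ((m - j + n) choose n) * y ^ j)
     - (\<Sum>j\<le>Suc m. real (Suc m choose j) * real ((Suc m - j + n) choose n) * y ^ j)
     = (\<Sum>j\<le>m. real (m choose j) * (2*real ((m - j + n) choose n) - real ((Suc m - j + n) choose n)) * y^j)"
proof -
  have "(2+y)*(\<Sum>j\<le>m. real (m choose j) * real ((m - j + n) choose n) * y ^ j)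
     - (\<Sum>j\<le>Suc m. real (Suc m choose j) * real ((Suc m - j + n) choose n) * y ^ j)
     = 2*(\<Sum>j\<le>m. real (m choose j) * real ((m - j + n) choose n) * y ^ j)
       - (\<Sum>j\<le>m. real (m choose j) * real ((Suc m - j + n) choose n) * y ^ j)"
    unfolding F_split by (simp add: algebra_simps)
  also have "\<dots> = (\<Sum>j\<le>m. real (m choose j) * (2*real ((m - j + n) choose n) - real ((Suc m - j + n) choose n)) * y^j)"
    by (simp add: sum_distrib_left sum_subtractf[symmetric] algebra_simps)
  finally show ?thesis .
qed

theorem lemma15:
  fixes d k :: nat and x :: real
  assumes "d \<ge> 5" and "k = k0 d" and "x > 1"
  shows "(x + 1) * deriv (fpoly d k) x / real k < (1 + eta d k x) * fpoly d k x"
proof -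
  define n where "n = d - k"
  have cs: "(d = 2*n+1 \<and> k = n+1) \<or> (d = 2*n+2 \<and> k = n+2)"
    using assms(1,2) unfolding k0_def n_def by (cases "odd d") (auto elim!: oddE evenE)
  have n2: "n \<ge> 2" using cs assms(1) by auto
  have kd: "d = k + n" using cs by auto
  obtain m where km: "k = Suc m" using cs by auto
  define y where "y = x - 1"
  have y: "y > 0" using assms(3) y_def by simp
  define Cd where "Cd = real (d choose k)"
  have Cdn: "Cd = real ((Suc m + n) choose n)"
    unfolding Cd_def kd km using binomial_symmetric[of n "Suc m + n"] by simp
  have Cdp: "Cd > 0" unfolding Cd_def kd by simp
  define F where "F = (\<Sum>j\<le>Suc m. real (Suc m choose j) * real ((Suc m - j + n) choose n) * y ^ j)"
  define B where "B = (\<Sum>j\<le>m. real (m choose j) * real ((m - j + n) choose n) * y ^ j)"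
  define P where "P = (\<lambda>z::real. (\<Sum>j\<le>k. real ((k choose j) * ((k - j + n) choose n)) * (z - 1) ^ j) / Cd)"
  have fP: "fpoly d k = P"
  proof
    fix z :: real
    show "fpoly d k z = P z"
      unfolding fpoly_def P_def Cd_def n_def[symmetric] expand ..
  qed
  have fx: "fpoly d k x = F / Cd"
    unfolding fP unfolding P_def F_def y_def km by (simp only: of_nat_mult mult.assoc)
  have "(P has_real_derivative (\<Sum>j\<le>k. real ((k choose j) * ((k - j + n) choose n)) * (real j * (x - 1) ^ (j - 1))) / Cd) (at x)"
    unfolding P_def by (intro DERIV_cdivide has_der)
  then have "deriv P x = (\<Sum>j\<le>k. real ((k choose j) * ((k - j + n) choose n)) * (real j * (x - 1) ^ (j - 1))) / Cd"
    by (rule DERIV_imp_deriv)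
  also have "\<dots> = real k * B / Cd"
    unfolding B_def y_def km using deriv_shift[of m n "x - 1"] by (simp only: of_nat_mult mult.assoc)
  finally have der: "deriv (fpoly d k) x = real k * B / Cd" unfolding fP .
  have kp: "real k > 0" using km by simp
  have lhs: "(x + 1) * deriv (fpoly d k) x / real k = (2+y)*B/Cd"
  proof -
    have "real k \<noteq> 0" "Cd \<noteq> 0" using kp Cdp by auto
    then show ?thesis unfolding der y_def by (simp add: field_simps)
  qed
  define f where "f = F / Cd"
  define Sg where "Sg = 2*real k - real d"
  define hs where "hs = ((2+y)*B - F)/Cd"
  have Fgt: "F > Cd" unfolding F_def Cdn by (rule F_gt[OF y])
  have fgt: "f > 1" unfolding f_def using Fgt Cdp by simp
  have etaeq: "eta d k x = Sg/(real n + sqrt((real n)^2 + real d*Sg*f))"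
    unfolding eta_def Sg_def f_def fx[symmetric] n_def using kd by (simp add: of_nat_diff)
  have Sgp: "Sg > 0" unfolding Sg_def using cs by auto
  have eta_ge: "2*Sg*real k/(real d*(real d + Sg*f)) \<le> eta d k x"
    unfolding etaeq Sg_def using eta_lb[of "real d" "real n" "real k" f] kd fgt cs by auto
  have HsE: "(2+y)*B - F = (\<Sum>j\<le>m. real (m choose j) * (2*real ((m - j + n) choose n) - real ((Suc m - j + n) choose n)) * y^j)"
    unfolding B_def F_def by (rule Hs_eq)
  have core: "hs * real d * (real d + Sg*f) < 2*Sg*real k*f"
  proof (cases "d = 2*n+1 \<and> k = n+1")
    case True
    then have dd: "d = 2*n+1" and kk: "k = n+1" and mm: "m = n" using km by auto
    define c where "c = real ((2*n) choose n)"
    define u where "u = real ((2*n+1) choose n)"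
    have r1: "(real n+1)*u = (2*real n+1)*c"
    proof -
      have "real ((n+1)*((2*n+1) choose n)) = real ((2*n+1)*((2*n) choose n))"
        using rels(1)[OF n2] by (rule arg_cong)
      then show ?thesis by (simp only: of_nat_mult of_nat_add of_nat_1 of_nat_numeral u_def c_def)
    qed
    have Cdu: "Cd = u" unfolding Cd_def u_def dd kk rels(9)[OF n2] ..
    have up: "u > 0" unfolding u_def by simp
    have HsB: "(2+y)*B - F \<le> 2*c - u"
      unfolding HsE mm c_def u_def using odd_H[of n y] n2 y by simp
    have Sg1: "Sg = 1" unfolding Sg_def dd kk by simp
    have e: "(2*real n+1)*(2*c - u) = u" using r1 by (simp add: algebra_simps)
    have hd: "hs * real d \<le> 1"
    proof -
      have "hs * real d = ((2+y)*B - F) * (2*real n+1) / u" unfolding hs_def Cdu dd by simp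
      also have "\<dots> \<le> (2*c - u) * (2*real n+1) / u"
        using HsB up by (intro divide_right_mono mult_right_mono) auto
      also have "\<dots> = 1" using e up by (simp add: algebra_simps)
      finally show ?thesis .
    qed
    have dfp: "real d + Sg*f > 0" using fgt Sg1 by simp
    have "hs * real d * (real d + Sg*f) \<le> 1 * (real d + Sg*f)"
      using hd dfp by (intro mult_right_mono) auto
    also have "\<dots> < 2*Sg*real k*f"
    proof -
      have "real d < real d * f" using fgt dd by simp
      then show ?thesis unfolding Sg1 using dd kk by (simp add: algebra_simps)
    qed
    finally show ?thesis .
  next
    case False
    then have dd: "d = 2*n+2" and kk: "k = n+2" using cs by auto
    then have mm: "m = Suc n" using km by auto
    define c where "c = real ((2*n) choose n)"
    define u where "u = real ((2*n+1) choose n)"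
    define V where "V = real ((2*n+2) choose n)"
    define g where "g = real ((2*n-2) choose (n-1))"
    define w1 where "w1 = real ((2*n-1) choose n)"
    define w2 where "w2 = real ((2*n-2) choose n)"
    define t3 where "t3 = real (Suc n choose 3)"
    define t2 where "t2 = real (Suc (Suc n) choose 2)"
    have sb1: "real (2*n-1) = 2*real n - 1" "real (n-1) = real n - 1" using n2 by (auto simp: of_nat_diff)
    have r1: "(real n+1)*u = (2*real n+1)*c"
    proof -
      have "real ((n+1)*((2*n+1) choose n)) = real ((2*n+1)*((2*n) choose n))"
        using rels(1)[OF n2] by (rule arg_cong)
      then show ?thesis by (simp only: of_nat_mult of_nat_add of_nat_1 of_nat_numeral u_def c_def)
    qed
    have r2: "(real n+2)*V = (2*real n+2)*u"
    proof -
      have "real ((n+2)*((2*n+2) choose n)) = real ((2*n+2)*((2*n+1) choose n))"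
        using rels(2)[OF n2] by (rule arg_cong)
      then show ?thesis by (simp only: of_nat_mult of_nat_add of_nat_1 of_nat_numeral u_def V_def)
    qed
    have r3: "real n*c = 2*(2*real n-1)*g"
    proof -
      have "real (n*((2*n) choose n)) = real (2*(2*n-1)*((2*n-2) choose (n-1)))"
        using rels(3)[OF n2] by (rule arg_cong)
      then show ?thesis by (simp only: of_nat_mult of_nat_numeral sb1 c_def g_def)
    qed
    have r4: "real n*w1 = (2*real n-1)*g"
    proof -
      have "real (n*((2*n-1) choose n)) = real ((2*n-1)*((2*n-2) choose (n-1)))"
        using rels(4)[OF n2] by (rule arg_cong)
      then show ?thesis by (simp only: of_nat_mult of_nat_numeral sb1 w1_def g_def)
    qed
    have r5: "real n*w2 = (real n-1)*g"
    proof -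
      have "real (n*((2*n-2) choose n)) = real ((n-1)*((2*n-2) choose (n-1)))"
        using rels(5)[OF n2] by (rule arg_cong)
      then show ?thesis by (simp only: of_nat_mult of_nat_numeral sb1 w2_def g_def)
    qed
    have r6: "6*t3 = (real n+1)*real n*(real n-1)"
    proof -
      have "real (6*((n+1) choose 3)) = real ((n+1)*n*(n-1))"
        using rels(6)[OF n2] by (rule arg_cong)
      then show ?thesis by (simp only: of_nat_mult of_nat_add of_nat_1 of_nat_numeral sb1 t3_def Suc_eq_plus1)
    qed
    have r7: "2*t2 = (real n+2)*(real n+1)"
    proof -
      have "real (2*((n+2) choose 2)) = real ((n+2)*(n+1))"
        using rels(7)[OF n2] by (rule arg_cong)
      moreover have eq: "Suc (Suc n) = n+2" by simp
      ultimately show ?thesis unfolding t2_def eq by (simp only: of_nat_mult of_nat_add of_nat_1 of_nat_numeral)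
    qed
    have CdV: "Cd = V" unfolding Cd_def V_def dd kk rels(8)[OF n2] ..
    have cp: "c > 0" unfolding c_def by simp
    have HsB0: "(2+y)*B - F \<le> (2*u - V) + real (n+1)*(2*c - u)*y + t3*(2*w2 - w1)*y^3"
      unfolding HsE mm c_def u_def V_def t3_def w1_def w2_def by (rule even_H[OF n2 less_imp_le[OF y]])
    then have HsB: "(2+y)*B - F \<le> (2*u - V) + (real n+1)*(2*c - u)*y + t3*(2*w2 - w1)*y^3"
      by (simp only: of_nat_add of_nat_1)
    have FB0: "F \<ge> V + real (n+2)*u*y + t2*c*y^2"
      unfolding F_def mm c_def u_def V_def t2_def by (rule even_F[OF n2 less_imp_le[OF y]])
    then have FB: "F \<ge> V + (real n+2)*u*y + t2*c*y^2"
      by (simp only: of_nat_add of_nat_numeral)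
    have nr: "real n \<ge> 2" using n2 by simp
    have nint: "real n = 2 \<or> real n \<ge> 3" using n2 by auto
    have res: "((2+y)*B - F)/V*(2*real n+2)*((2*real n+2) + 2*(F/V)) < 2*2*(real n+2)*(F/V)"
      by (rule even_case_real[OF nr nint y cp r1 r2 r3 r4 r5 r6 r7 HsB FB])
    have Sg2: "Sg = 2" unfolding Sg_def dd kk by simp
    show ?thesis using res unfolding hs_def f_def CdV Sg2 dd kk by (simp add: algebra_simps)
  qed
  have Dp: "real d * (real d + Sg*f) > 0" using Sgp fgt kd kp by (intro mult_pos_pos add_pos_pos) auto
  have "hs < 2*Sg*real k*f / (real d * (real d + Sg*f))"
    using core Dp by (simp add: field_simps)
  also have "\<dots> = (2*Sg*real k/(real d*(real d + Sg*f))) * f" by simp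
  also have "\<dots> \<le> eta d k x * f" using eta_ge fgt by (intro mult_right_mono) auto
  finally have hlt: "hs < eta d k x * f" .
  have "(2+y)*B/Cd = hs + f" unfolding hs_def f_def using Cdp by (simp add: field_simps)
  also have "\<dots> < (1 + eta d k x) * f" using hlt by (simp add: algebra_simps)
  finally show ?thesis unfolding lhs fx f_def .
qed

end
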